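(* For every BIMS channel with capacity $C$ and every $R\ge0$, the expurgated exponent satisfies $$E_{\rm ex}^{\rm bsc}(R;C)\le E_{\rm ex}(R)\le E_{\rm ex}^{\rm bec}(R;C).$$
   Context: A BIMS (binary-input memoryless symmetric) channel is a memoryless channel with input alphabet $\{x_0,x_1\}$, finite output alphabet $\mathcal Y$ and transition probabilities $P_{Y|X}(y|x)$. It is symmetric in Gallager's sense: the columns of the $2\times|\mathcal Y|$ transition matrix (rows indexed by inputs) can be partitioned into submatrices such that, in each submatrix, every row is a permutation of every other row and every column is a permutation of every other column. The capacity $C$ is $I(X;Y)$ under equiprobable inputs, in bits, and logarithms are base 2. The Bhattacharyya parameter is $Z=\sum_y\sqrt{P_{Y|X}(y|x_0)P_{Y|X}(y|x_1)}$. For $\rho\ge1$ and $Z\in[0,1]$, let $$E_x(\rho;Z)=-\rho\log\frac{1+Z^{1/\rho}}{2},\qquad E_{\rm ex}(R)=\sup_{\rho\ge1}\bigl(E_x(\rho;Z)-\rho R\bigr).$$ Define $$E_{\rm ex}^{\rm bec}(R;C)=\sup_{\rho\ge1}\bigl(E_x(\rho;1-C)-\rho R\bigr),\qquad E_{\rm ex}^{\rm bsc}(R;C)=\sup_{\rho\ge1}\bigl(E_x(\rho;2\sqrt{\varepsilon(1-\varepsilon)})-\rho R\bigr),$$ where $\varepsilon=h^{-1}(1-C)$, $h$ is the binary entropy function and $h^{-1}$ its inverse on $[0,\tfrac12]$. These are the expurgated exponents of the BEC and BSC of capacity $C$. *)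

theory Defs
  imports "HOL-Analysis.Analysis" "HOL-Combinatorics.Permutations" "HOL-Library.Multiset"
begin

text \<open>A binary-input channel with finite output alphabet (a finite type 'y).
  Inputs: x0 = False, x1 = True.  W x y = P(Y=y | X=x).\<close>

definition channel :: "(bool \<Rightarrow> 'y::finite \<Rightarrow> real) \<Rightarrow> bool" where
  "channel W \<longleftrightarrow> (\<forall>x y. 0 \<le> W x y) \<and> (\<forall>x. (\<Sum>y\<in>UNIV. W x y) = 1)"

text \<open>Symmetry in Gallager's sense: the columns (outputs) can be partitioned into blocks
  such that in each block every row is a permutation of every other row and every
  column is a permutation of every other column.\<close>

definition gallager_symmetric :: "(bool \<Rightarrow> 'y::finite \<Rightarrow> real) \<Rightarrow> bool" where
  "gallager_symmetric W \<longleftrightarrow>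
     (\<exists>P. partition_on (UNIV :: 'y set) P \<and>
       (\<forall>B\<in>P.
          (\<forall>x x'. \<exists>\<sigma>. \<sigma> permutes B \<and> (\<forall>y\<in>B. W x' y = W x (\<sigma> y))) \<and>
          (\<forall>y\<in>B. \<forall>y'\<in>B. {# W False y, W True y #} = {# W False y', W True y' #})))"

definition BIMS :: "(bool \<Rightarrow> 'y::finite \<Rightarrow> real) \<Rightarrow> bool" where
  "BIMS W \<longleftrightarrow> channel W \<and> gallager_symmetric W"

text \<open>Capacity: I(X;Y) in bits under equiprobable inputs (convention 0 log 0 = 0).\<close>

definition capacity :: "(bool \<Rightarrow> 'y::finite \<Rightarrow> real) \<Rightarrow> real" where
  "capacity W = (\<Sum>y\<in>UNIV. \<Sum>x\<in>UNIV.
      (if W x y = 0 then 0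
       else (1/2) * W x y * log 2 (W x y / ((W False y + W True y) / 2))))"

definition bhattacharyya :: "(bool \<Rightarrow> 'y::finite \<Rightarrow> real) \<Rightarrow> real" where
  "bhattacharyya W = (\<Sum>y\<in>UNIV. sqrt (W False y * W True y))"

definition bin_entropy :: "real \<Rightarrow> real" where
  "bin_entropy p = (if p = 0 \<or> p = 1 then 0 else - p * log 2 p - (1 - p) * log 2 (1 - p))"

definition bin_entropy_inv :: "real \<Rightarrow> real" where
  "bin_entropy_inv t = (THE p. 0 \<le> p \<and> p \<le> 1/2 \<and> bin_entropy p = t)"

definition Ex :: "real \<Rightarrow> real \<Rightarrow> real" where
  "Ex \<rho> Z = - \<rho> * log 2 ((1 + Z powr (1 / \<rho>)) / 2)"

text \<open>Expurgated exponent for a given Bhattacharyya parameter; valued in the extended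
  reals since the supremum may be +\<infinity> (e.g. Z = 0).\<close>

definition Eex_Z :: "real \<Rightarrow> real \<Rightarrow> ereal" where
  "Eex_Z Z R = (SUP \<rho>\<in>{1..}. ereal (Ex \<rho> Z - \<rho> * R))"

definition Eex :: "(bool \<Rightarrow> 'y::finite \<Rightarrow> real) \<Rightarrow> real \<Rightarrow> ereal" where
  "Eex W R = Eex_Z (bhattacharyya W) R"

definition Eex_bec :: "real \<Rightarrow> real \<Rightarrow> ereal" where
  "Eex_bec R C = Eex_Z (1 - C) R"

definition Eex_bsc :: "real \<Rightarrow> real \<Rightarrow> ereal" where
  "Eex_bsc R C = (let \<epsilon> = bin_entropy_inv (1 - C)
                  in Eex_Z (2 * sqrt (\<epsilon> * (1 - \<epsilon>))) R)"

end

theory Submission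
  imports Defs "HOL-Real_Asymp.Real_Asymp"
begin

lemma ln_ge_ratio:
  fixes x :: real assumes "1 \<le> x"
  shows "2 * (x - 1) / (x + 1) \<le> ln x"
proof -
  let ?f = "\<lambda>x::real. ln x - 2 * (x - 1) / (x + 1)"
  have "?f 1 \<le> ?f x"
  proof (rule DERIV_nonneg_imp_nondecreasing[OF assms])
    fix t :: real assume t: "1 \<le> t" "t \<le> x"
    have tp: "t + 1 > 0" "t > 0" using t by auto
    have "(?f has_real_derivative (1/t - (2 * (t + 1) - 2 * (t - 1)) / (t+1)^2)) (at t)"
      using tp by (auto intro!: derivative_eq_intros simp: power2_eq_square)
    moreover have "(1/t - (2 * (t + 1) - 2 * (t - 1)) / (t+1)^2) = 1/t - 4 / (t+1)^2" by simp
    ultimately have "(?f has_real_derivative (1/t - 4 / (t+1)^2)) (at t)" by simp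
    moreover have "1/t - 4 / (t+1)^2 \<ge> 0"
    proof -
      have "1/t - 4/(t+1)^2 = (t - 1)^2 / (t * (t+1)^2)" using tp
        by (simp add: divide_simps power2_eq_square) (simp add: algebra_simps)
      also have "\<dots> \<ge> 0" using t by simp
      finally show ?thesis .
    qed
    ultimately show "\<exists>y. (?f has_real_derivative y) (at t) \<and> 0 \<le> y" by blast
  qed
  thus ?thesis by simp
qed

definition F :: "real \<Rightarrow> real" where "F x = (x - 1) / (sqrt x * ln x)"

lemma F_mono:
  fixes a b :: real assumes "1 < a" "a \<le> b"
  shows "F a \<le> F b"
proof (rule DERIV_nonneg_imp_nondecreasing[OF assms(2)])
  fix t :: real assume t: "a \<le> t" "t \<le> b"
  hence t1: "1 < t" using assms by simp
  hence lt: "ln t > 0" by simp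
  have st: "sqrt t > 0" using t1 by simp
  define d where "d = (sqrt t * ln t - (t - 1) * (ln t / (2 * sqrt t) + sqrt t / t)) / (sqrt t * ln t)^2"
  have "(F has_real_derivative d) (at t)"
    unfolding F_def[abs_def] d_def using t1 lt st
    by (auto intro!: derivative_eq_intros simp: field_simps power2_eq_square)
  moreover have "d \<ge> 0"
  proof -
    have e: "sqrt t * ln t - (t - 1) * (ln t / (2 * sqrt t) + sqrt t / t)
           = ((t + 1) * ln t - 2 * (t - 1)) / (2 * sqrt t)"
    proof -
      define s where "s = sqrt t"
      have ts: "t = s * s" using t1 unfolding s_def by simp
      have sp: "s > 0" using st s_def by simp
      show ?thesis unfolding s_def[symmetric] unfolding ts using sp
        by (simp add: divide_simps) (simp add: algebra_simps)
    qed
    have "2 * (t - 1) / (t + 1) \<le> ln t" using ln_ge_ratio t1 by simp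
    hence "(t + 1) * ln t - 2 * (t - 1) \<ge> 0" using t1 by (simp add: field_simps)
    thus ?thesis unfolding d_def e using st by simp
  qed
  ultimately show "\<exists>y. (F has_real_derivative y) (at t) \<and> 0 \<le> y" by blast
qed

definition Hn :: "real \<Rightarrow> real" where "Hn p = - p * ln p - (1 - p) * ln (1 - p)"
definition zz :: "real \<Rightarrow> real" where "zz p = 2 * sqrt (p * (1 - p))"

lemma Hn_deriv: "0 < p \<Longrightarrow> p < 1 \<Longrightarrow> (Hn has_real_derivative (ln (1 - p) - ln p)) (at p)"
proof -
  assume p: "0 < p" "p < 1"
  have "(Hn has_real_derivative (- (ln p + p * (1/p)) - (- ln (1 - p) + (1 - p) * (- 1 / (1 - p))))) (at p)"
    unfolding Hn_def[abs_def] using p by (auto intro!: derivative_eq_intros)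
  moreover have "- (ln p + p * (1/p)) - (- ln (1 - p) + (1 - p) * (- 1 / (1 - p))) = ln (1 - p) - ln p"
    using p by simp
  ultimately show ?thesis by simp
qed

lemma zz_deriv: "0 < p \<Longrightarrow> p < 1 \<Longrightarrow> (zz has_real_derivative ((1 - 2 * p) / sqrt (p * (1 - p)))) (at p)"
proof -
  assume p: "0 < p" "p < 1"
  have q: "p * (1 - p) > 0" using p by simp
  have d1: "((\<lambda>x. x * (1 - x)) has_real_derivative (1 - 2 * p)) (at p)"
  proof -
    have "((\<lambda>x. x * (1 - x)) has_real_derivative (1 * (1 - p) + (0 - 1) * p)) (at p)"
      by (intro DERIV_mult DERIV_ident DERIV_diff DERIV_const)
    thus ?thesis by (simp add: algebra_simps)
  qed
  have d2: "((\<lambda>x. 2 * sqrt (x * (1 - x))) has_real_derivative (2 * (inverse (sqrt (p * (1 - p))) / 2 * (1 - 2 * p)))) (at p)"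
    by (intro DERIV_cmult DERIV_chain2[OF DERIV_real_sqrt[OF q] d1])
  have sq: "sqrt (p * (1 - p)) > 0" using q by simp
  have eq: "2 * (inverse (sqrt (p * (1 - p))) / 2 * (1 - 2 * p)) = (1 - 2 * p) / sqrt (p * (1 - p))"
  proof -
    have "\<And>S::real. S > 0 \<Longrightarrow> 2 * (inverse S / 2 * (1 - 2 * p)) = (1 - 2 * p) / S"
      by (simp add: field_simps)
    thus ?thesis using sq by blast
  qed
  show ?thesis using d2 unfolding zz_def[abs_def] eq .
qed

lemma Hn_lim0: "(Hn \<longlongrightarrow> Hn 0) (at_right 0)"
  unfolding Hn_def[abs_def] by simp real_asymp

lemma Hn_cont: "continuous_on {0..1/2} Hn"
proof (rule continuous_on_IccI)
  show "(Hn \<longlongrightarrow> Hn 0) (at_right 0)" by (rule Hn_lim0)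
  show "(Hn \<longlongrightarrow> Hn (1/2)) (at_left (1/2))"
    using DERIV_isCont[OF Hn_deriv[of "1/2"]] by (simp add: isCont_def filterlim_at_split)
  show "Hn \<midarrow>x\<rightarrow> Hn x" if "0 < x" "x < 1/2" for x
    using DERIV_isCont[OF Hn_deriv[of x]] that by (simp add: isCont_def)
qed simp

lemma zz_cont: "continuous_on S zz"
  unfolding zz_def[abs_def] by (intro continuous_intros)

lemma ratio_F: assumes "0 < p" "p < 1/2"
  shows "(1 - 2 * p) / sqrt (p * (1 - p)) = F ((1 - p) / p) * (ln (1 - p) - ln p)"
proof -
  have l: "ln (1 - p) - ln p = ln ((1 - p) / p)" using assms by (simp add: ln_div)
  have lp: "ln ((1 - p) / p) > 0" using assms by simp
  have sq: "sqrt ((1 - p) / p) = sqrt (1 - p) / sqrt p" by (simp add: real_sqrt_divide)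
  have sp: "sqrt p > 0" "sqrt (1 - p) > 0" using assms by auto
  have "F ((1 - p) / p) * (ln (1 - p) - ln p) = ((1 - p) / p - 1) / sqrt ((1 - p) / p)"
    unfolding F_def l using lp by simp
  also have "\<dots> = (1 - 2 * p) / sqrt (p * (1 - p))"
  proof -
    define a where "a = sqrt p" define b where "b = sqrt (1 - p)"
    have pa: "p = a * a" "1 - p = b * b" using assms unfolding a_def b_def by auto
    have "((1 - p) / p - 1) / sqrt ((1 - p) / p) = (b*b/(a*a) - 1) / (b / a)"
    proof -
      have e1: "(1-p)/p = (b*b)/(a*a)" by (simp only: pa(2)[symmetric] pa(1)[symmetric])
      show ?thesis unfolding sq unfolding a_def[symmetric] b_def[symmetric] unfolding e1 ..
    qed
    also have "\<dots> = (b*b - a*a) / (a * b)" using sp unfolding a_def[symmetric] b_def[symmetric]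
      by (simp add: field_simps)
    also have "\<dots> = (1 - 2 * p) / sqrt (p * (1 - p))"
    proof -
      have "sqrt (p * (1 - p)) = a * b" by (simp add: real_sqrt_mult a_def b_def)
      moreover have "1 - 2 * p = b * b - a * a" using pa by linarith
      ultimately show ?thesis by simp
    qed
    finally show ?thesis .
  qed
  finally show ?thesis by simp
qed

lemma "True" by simp

lemma Hn_deriv_pos: "0 < (p::real) \<Longrightarrow> p < 1/2 \<Longrightarrow> ln (1 - p) - ln p > 0"
  by (simp add: ln_less_cancel_iff)

lemma support:
  assumes p0: "0 < p0" "p0 < 1/2" and p: "0 \<le> p" "p \<le> 1/2"
  shows "zz p \<le> zz p0 + F ((1 - p0) / p0) * (Hn p - Hn p0)"
proof -
  define k where "k = F ((1 - p0) / p0)"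
  define G where "G x = zz p0 + k * (Hn x - Hn p0) - zz x" for x
  have Gd: "(G has_real_derivative (k * (ln (1 - x) - ln x) - (1 - 2 * x) / sqrt (x * (1 - x)))) (at x)"
    if "0 < x" "x < 1" for x
  proof -
    have "(G has_real_derivative (0 + k * ((ln (1 - x) - ln x) - 0) - (1 - 2 * x) / sqrt (x * (1 - x)))) (at x)"
      unfolding G_def[abs_def] using that
      by (intro DERIV_diff DERIV_add DERIV_const DERIV_cmult Hn_deriv zz_deriv)
    thus ?thesis by simp
  qed
  have Gc: "continuous_on {0..1/2} G"
    unfolding G_def[abs_def] by (intro continuous_intros Hn_cont zz_cont)
  have a0: "1 < (1 - p0) / p0" using p0 by (simp add: field_simps)
  have "G p \<ge> G p0"
  proof (cases "p \<le> p0")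
    case True
    have "G p0 \<le> G p"
    proof (rule DERIV_nonpos_imp_decreasing_open[of p p0 G, OF True])
      fix x assume x: "p < x" "x < p0"
      have x0: "0 < x" "x < 1/2" using x p p0 by auto
      have "(1 - p0) / p0 \<le> (1 - x) / x" using x x0 by (simp add: field_simps)
      hence "k \<le> F ((1 - x) / x)" unfolding k_def using F_mono a0 by blast
      hence "k * (ln (1 - x) - ln x) \<le> F ((1 - x) / x) * (ln (1 - x) - ln x)"
        using Hn_deriv_pos[OF x0] by (simp add: mult_right_mono)
      hence "k * (ln (1 - x) - ln x) - (1 - 2 * x) / sqrt (x * (1 - x)) \<le> 0"
        using ratio_F[OF x0] by simp
      thus "\<exists>y. (G has_real_derivative y) (at x) \<and> y \<le> 0" using Gd x0 by force
    next
      show "continuous_on {p..p0} G" using Gc by (rule continuous_on_subset) (use p p0 in auto)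
    qed
    thus ?thesis .
  next
    case False
    show "G p0 \<le> G p"
    proof (rule DERIV_nonneg_imp_increasing_open[of p0 p G])
      show "p0 \<le> p" using False by simp
    next
      fix x assume x: "p0 < x" "x < p"
      have x0: "0 < x" "x < 1/2" using x p p0 by auto
      have "(1 - x) / x \<le> (1 - p0) / p0" using x x0 p0 by (simp add: field_simps)
      moreover have "1 < (1 - x) / x" using x0 by (simp add: field_simps)
      ultimately have "F ((1 - x) / x) \<le> k" unfolding k_def using F_mono by blast
      hence "F ((1 - x) / x) * (ln (1 - x) - ln x) \<le> k * (ln (1 - x) - ln x)"
        using Hn_deriv_pos[OF x0] by (simp add: mult_right_mono)
      hence "k * (ln (1 - x) - ln x) - (1 - 2 * x) / sqrt (x * (1 - x)) \<ge> 0"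
        using ratio_F[OF x0] by simp
      thus "\<exists>y. (G has_real_derivative y) (at x) \<and> y \<ge> 0" using Gd x0 by force
    next
      show "continuous_on {p0..p} G" using Gc by (rule continuous_on_subset) (use p p0 in auto)
    qed
  qed
  moreover have "G p0 = 0" unfolding G_def by simp
  ultimately show ?thesis unfolding G_def k_def by simp
qed


lemma Hn_0[simp]: "Hn 0 = 0" by (simp add: Hn_def)
lemma Hn_half: "Hn (1/2) = ln 2"
  by (simp add: Hn_def ln_div)
lemma Hn_sym: "Hn (1 - p) = Hn p" by (simp add: Hn_def algebra_simps)
lemma zz_sym: "zz (1 - p) = zz p" by (simp add: zz_def mult.commute)
lemma zz_0[simp]: "zz 0 = 0" by (simp add: zz_def)
lemma zz_half: "zz (1/2) = 1"
proof -
  have "sqrt ((1/2::real) * (1 - 1/2)) = 1/2" by (rule real_sqrt_unique) (simp_all add: power2_eq_square)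
  thus ?thesis by (simp add: zz_def)
qed
lemma zz_nonneg: "0 \<le> p \<Longrightarrow> p \<le> 1 \<Longrightarrow> 0 \<le> zz p" by (simp add: zz_def)
lemma zz_le1: "zz p \<le> 1"
proof -
  have "0 \<le> (2 * p - 1) * (2 * p - 1)" by simp
  hence a: "p * (1 - p) \<le> (1/2) * (1/2)" by (simp add: algebra_simps)
  have b: "sqrt (p * (1 - p)) \<le> sqrt ((1/2) * (1/2))" using a by (rule real_sqrt_le_mono)
  have c: "sqrt ((1/2::real) * (1/2)) = 1/2" by (rule real_sqrt_unique) (simp_all add: power2_eq_square)
  have "sqrt (p * (1 - p)) \<le> 1/2" using b unfolding c .
  thus ?thesis by (simp add: zz_def)
qed

lemma Hn_strict_mono: assumes "0 \<le> a" "a < b" "b \<le> 1/2" shows "Hn a < Hn b"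
proof (rule DERIV_pos_imp_increasing_open[OF assms(2)])
  fix x assume x: "a < x" "x < b"
  hence "0 < x" "x < 1/2" using assms by auto
  thus "\<exists>y. (Hn has_real_derivative y) (at x) \<and> 0 < y"
    using Hn_deriv[of x] Hn_deriv_pos[of x] by auto
next
  show "continuous_on {a..b} Hn" using Hn_cont by (rule continuous_on_subset) (use assms in auto)
qed

lemma Hn_mono: "0 \<le> a \<Longrightarrow> a \<le> b \<Longrightarrow> b \<le> 1/2 \<Longrightarrow> Hn a \<le> Hn b"
  using Hn_strict_mono[of a b] by (cases "a = b") auto

lemma Hn_nonneg: "0 \<le> p \<Longrightarrow> p \<le> 1/2 \<Longrightarrow> 0 \<le> Hn p"
  using Hn_mono[of 0 p] by simp
lemma Hn_le: "0 \<le> p \<Longrightarrow> p \<le> 1/2 \<Longrightarrow> Hn p \<le> ln 2"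
  using Hn_mono[of p "1/2"] Hn_half by simp

lemma Hn_onto: assumes "0 \<le> t" "t \<le> ln 2" shows "\<exists>p. 0 \<le> p \<and> p \<le> 1/2 \<and> Hn p = t"
proof -
  have "\<exists>x\<ge>0. x \<le> 1/2 \<and> Hn x = t"
    by (rule IVT'[of Hn 0 t "1/2"]) (use assms Hn_half Hn_cont in auto)
  thus ?thesis by blast
qed

lemma F_pos: "1 < a \<Longrightarrow> 0 < F a" unfolding F_def by simp

lemma lower: assumes "0 \<le> p" "p \<le> 1/2" shows "Hn p / ln 2 \<le> zz p"
proof (cases "p = 0 \<or> p = 1/2")
  case True
  then consider "p = 0" | "p = 1/2" by blast
  thus ?thesis
  proof cases
    case 1 thus ?thesis by simp
  next
    case 2 show ?thesis unfolding 2 Hn_half zz_half by simp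
  qed
next
  case False
  hence p: "0 < p" "p < 1/2" using assms by auto
  define k where "k = F ((1 - p) / p)"
  have k: "k > 0" unfolding k_def by (rule F_pos) (use p in \<open>simp add: field_simps\<close>)
  have s1: "zz 0 \<le> zz p + k * (Hn 0 - Hn p)" unfolding k_def by (rule support) (use p in auto)
  have s2: "zz (1/2) \<le> zz p + k * (Hn (1/2) - Hn p)" unfolding k_def by (rule support) (use p in auto)
  have A: "k * Hn p \<le> zz p" using s1 by (simp add: algebra_simps)
  have B: "1 - zz p \<le> k * ln 2 - k * Hn p" using s2 Hn_half zz_half by (simp add: algebra_simps)
  have z0: "0 \<le> zz p" "zz p \<le> 1" using zz_nonneg zz_le1 p by auto
  have H0: "0 \<le> Hn p" using Hn_nonneg p by auto
  have "k * Hn p \<le> zz p * (k * ln 2)"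
  proof -
    have "zz p * (1 - zz p + k * Hn p) \<le> zz p * (k * ln 2)"
      using B z0 by (intro mult_left_mono) auto
    moreover have "k * Hn p \<le> zz p * (1 - zz p + k * Hn p)"
    proof -
      have "k * Hn p * (1 - zz p) \<le> zz p * (1 - zz p)" using A z0 by (intro mult_right_mono) auto
      thus ?thesis by (simp add: algebra_simps)
    qed
    ultimately show ?thesis by linarith
  qed
  hence "Hn p \<le> zz p * ln 2" using k by (simp add: algebra_simps)
  thus ?thesis by (simp add: divide_simps)
qed

lemma jensen:
  fixes w q :: "'a \<Rightarrow> real" and Y :: "'a set"
  assumes fin: "finite Y" and w: "\<And>y. y \<in> Y \<Longrightarrow> 0 \<le> w y" and ws: "(\<Sum>y\<in>Y. w y) = 1"
    and q: "\<And>y. y \<in> Y \<Longrightarrow> 0 \<le> q y \<and> q y \<le> 1/2"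
    and p0: "0 \<le> p0" "p0 \<le> 1/2" and h: "Hn p0 = (\<Sum>y\<in>Y. w y * Hn (q y))"
  shows "(\<Sum>y\<in>Y. w y * zz (q y)) \<le> zz p0"
proof -
  consider "p0 = 0" | "p0 = 1/2" | "0 < p0 \<and> p0 < 1/2" using p0 by linarith
  thus ?thesis
  proof cases
    case 1
    have nn: "\<And>y. y \<in> Y \<Longrightarrow> 0 \<le> w y * Hn (q y)" using w q Hn_nonneg by auto
    have "(\<Sum>y\<in>Y. w y * Hn (q y)) = 0" using h 1 by simp
    hence "\<forall>y\<in>Y. w y * Hn (q y) = 0" using sum_nonneg_eq_0_iff[OF fin, of "\<lambda>y. w y * Hn (q y)"] nn by blast
    note A = this
    have "\<forall>y\<in>Y. w y * zz (q y) = 0"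
    proof
      fix y assume y: "y \<in> Y"
      hence "w y = 0 \<or> Hn (q y) = 0" using A by auto
      moreover have "Hn (q y) = 0 \<Longrightarrow> q y = 0"
        using Hn_strict_mono[of 0 "q y"] q[OF y] by force
      ultimately show "w y * zz (q y) = 0" by auto
    qed
    hence "(\<Sum>y\<in>Y. w y * zz (q y)) = 0" by (intro sum.neutral) blast
    thus ?thesis using 1 by simp
  next
    case 2
    have "(\<Sum>y\<in>Y. w y * zz (q y)) \<le> (\<Sum>y\<in>Y. w y * 1)"
      by (intro sum_mono mult_left_mono zz_le1 w)
    thus ?thesis using ws zz_half unfolding 2 by simp
  next
    case 3
    define k where "k = F ((1 - p0) / p0)"
    have "(\<Sum>y\<in>Y. w y * zz (q y)) \<le> (\<Sum>y\<in>Y. w y * (zz p0 + k * (Hn (q y) - Hn p0)))"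
      unfolding k_def using 3 q w by (intro sum_mono mult_left_mono support) auto
    also have "\<dots> = zz p0 * (\<Sum>y\<in>Y. w y) + k * ((\<Sum>y\<in>Y. w y * Hn (q y)) - Hn p0 * (\<Sum>y\<in>Y. w y))"
      by (simp add: algebra_simps sum.distrib sum_distrib_left sum_subtractf sum_distrib_right)
    also have "\<dots> = zz p0" using ws h by simp
    finally show ?thesis .
  qed
qed


lemma Ex_anti: assumes "0 \<le> Z1" "Z1 \<le> Z2" "1 \<le> \<rho>" shows "Ex \<rho> Z2 \<le> Ex \<rho> Z1"
proof -
  have m: "Z1 powr (1/\<rho>) \<le> Z2 powr (1/\<rho>)" using assms by (intro powr_mono2) auto
  have n: "0 \<le> Z1 powr (1/\<rho>)" by simp
  have p: "0 < (1 + Z1 powr (1/\<rho>)) / 2" using n by (simp add: add_pos_nonneg)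
  have "log 2 ((1 + Z1 powr (1/\<rho>)) / 2) \<le> log 2 ((1 + Z2 powr (1/\<rho>)) / 2)"
    using m p by (intro log_mono) auto
  thus ?thesis unfolding Ex_def using assms by (simp add: mult_left_mono)
qed

lemma Eex_Z_anti: assumes "0 \<le> Z1" "Z1 \<le> Z2" shows "Eex_Z Z2 R \<le> Eex_Z Z1 R"
  unfolding Eex_Z_def
proof (rule SUP_mono)
  fix n :: real assume "n \<in> {1..}"
  thus "\<exists>m\<in>{1..}. ereal (Ex n Z2 - n * R) \<le> ereal (Ex m Z1 - m * R)"
    using Ex_anti[OF assms, of n] by (intro bexI[of _ n]) auto
qed

lemma bin_entropy_Hn: "0 \<le> p \<Longrightarrow> p \<le> 1/2 \<Longrightarrow> bin_entropy p = Hn p / ln 2"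
  unfolding bin_entropy_def Hn_def log_def by (auto simp: field_simps)

lemma bin_entropy_inv_eq:
  assumes "0 \<le> p" "p \<le> 1/2" "Hn p = t * ln 2"
  shows "bin_entropy_inv t = p"
  unfolding bin_entropy_inv_def
proof (rule the_equality)
  show "0 \<le> p \<and> p \<le> 1 / 2 \<and> bin_entropy p = t" using assms bin_entropy_Hn by simp
next
  fix x assume x: "0 \<le> x \<and> x \<le> 1 / 2 \<and> bin_entropy x = t"
  have "bin_entropy x = Hn x / ln 2" using x bin_entropy_Hn[of x] by auto
  hence hx: "Hn x = Hn p" using assms x by simp
  show "x = p"
  proof (rule ccontr)
    assume "x \<noteq> p"
    hence "x < p \<or> p < x" by auto
    thus False using Hn_strict_mono[of x p] Hn_strict_mono[of p x] x assms hx by auto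
  qed
qed


definition gt :: "real \<Rightarrow> real \<Rightarrow> real" where
  "gt x s = (if x = 0 then 0 else (1/2) * x * log 2 (x / (s / 2)))"

lemma gt_eq: assumes "0 \<le> x" "0 < s" shows "gt x s = x / 2 + (1/2) * (x * ln (x / s)) / ln 2"
proof (cases "x = 0")
  case True thus ?thesis by (simp add: gt_def)
next
  case False
  hence x: "x > 0" using assms by simp
  have e: "x / (s / 2) = 2 * (x / s)" by simp
  have "ln (2 * (x / s)) = ln 2 + ln (x / s)" by (rule ln_mult_pos) (use x assms in simp_all)
  hence "ln (x / (s / 2)) = ln 2 + ln (x / s)" unfolding e .
  hence "log 2 (x / (s / 2)) = 1 + ln (x / s) / ln 2" unfolding log_def by (simp add: field_simps)
  thus ?thesis unfolding gt_def using False by (simp add: field_simps)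
qed

lemma col_C:
  assumes a: "0 \<le> a" and b: "0 \<le> b"
  shows "gt a (a + b) + gt b (a + b)
     = (a + b) / 2 * (1 - Hn (min (a / (a + b)) (1 - a / (a + b))) / ln 2)"
proof (cases "a + b = 0")
  case True
  hence "a = 0" "b = 0" using a b by auto
  thus ?thesis by (simp add: gt_def)
next
  case False
  hence s: "a + b > 0" using a b by simp
  define p where "p = a / (a + b)"
  have q: "Hn (min p (1 - p)) = Hn p" by (cases "p \<le> 1 - p") (auto simp: min_def Hn_sym)
  have p1: "1 - p = b / (a + b)" unfolding p_def using s by (simp add: field_simps)
  have "Hn p = - (a / (a + b)) * ln (a / (a + b)) - (b / (a + b)) * ln (b / (a + b))"
    unfolding Hn_def p1 unfolding p_def ..
  moreover have "\<And>S u v H L. S > 0 \<Longrightarrow> L > 0 \<Longrightarrow> H = - (a / S) * u - (b / S) * v \<Longrightarrow>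
      S / 2 * (1 - H / L) = S / 2 + (1/2) * (a * u + b * v) / L"
  proof -
    fix S u v H L :: real assume S: "S > 0" and L: "L > 0" and H: "H = - (a / S) * u - (b / S) * v"
    have "S * H = - (a * u + b * v)" unfolding H using S by (simp add: field_simps)
    hence "S / 2 * (1 - H / L) = S / 2 - (S * H) / (2 * L)" using L by (simp add: field_simps)
    also have "\<dots> = S / 2 + (1/2) * (a * u + b * v) / L" using \<open>S * H = _\<close> by (simp add: divide_simps)
    finally show "S / 2 * (1 - H / L) = S / 2 + (1/2) * (a * u + b * v) / L" .
  qed
  ultimately have "(a + b) / 2 * (1 - Hn p / ln 2) = (a + b) / 2 + (1/2) * (a * ln (a / (a + b)) + b * ln (b / (a + b))) / ln 2"
    using s by simp
  moreover have "gt a (a + b) + gt b (a + b) = (a + b) / 2 + (1/2) * (a * ln (a / (a + b)) + b * ln (b / (a + b))) / ln 2"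
    using gt_eq[OF a s] gt_eq[OF b s] by (simp add: field_simps)
  ultimately show ?thesis using q unfolding p_def by simp
qed

lemma col_Z:
  assumes a: "0 \<le> a" and b: "0 \<le> b"
  shows "sqrt (a * b) = (a + b) / 2 * zz (min (a / (a + b)) (1 - a / (a + b)))"
proof (cases "a + b = 0")
  case True
  hence "a = 0" "b = 0" using a b by auto
  thus ?thesis by simp
next
  case False
  hence s: "a + b > 0" using a b by simp
  define p where "p = a / (a + b)"
  have q: "zz (min p (1 - p)) = zz p" by (cases "p \<le> 1 - p") (auto simp: min_def zz_sym)
  have p1: "1 - p = b / (a + b)" unfolding p_def using s by (simp add: field_simps)
  have "p * (1 - p) = (a * b) / (a + b)^2" unfolding p1 unfolding p_def by (simp add: power2_eq_square)
  hence "sqrt (p * (1 - p)) = sqrt (a * b) / (a + b)" using s by (simp add: real_sqrt_divide)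
  hence "(a + b) / 2 * zz p = sqrt (a * b)" unfolding zz_def using s by simp
  thus ?thesis using q unfolding p_def by simp
qed

lemma chan_decomp:
  fixes W :: "bool \<Rightarrow> 'y::finite \<Rightarrow> real"
  assumes ch: "channel W"
  defines "w \<equiv> \<lambda>y. (W False y + W True y) / 2"
    and "q \<equiv> \<lambda>y. min (W False y / (W False y + W True y)) (1 - W False y / (W False y + W True y))"
  shows "(\<Sum>y\<in>UNIV. w y) = 1" "\<And>y. 0 \<le> w y" "\<And>y. 0 \<le> q y \<and> q y \<le> 1/2"
    "bhattacharyya W = (\<Sum>y\<in>UNIV. w y * zz (q y))"
    "capacity W = (\<Sum>y\<in>UNIV. w y * (1 - Hn (q y) / ln 2))"
proof -
  have nn: "\<And>x y. 0 \<le> W x y" and s1: "\<And>x. (\<Sum>y\<in>UNIV. W x y) = 1" using ch unfolding channel_def by auto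
  show "(\<Sum>y\<in>UNIV. w y) = 1" unfolding w_def
    using s1[of False] s1[of True] by (simp add: sum_divide_distrib[symmetric] sum.distrib)
  show "\<And>y. 0 \<le> w y" unfolding w_def using nn by (simp add: add_nonneg_nonneg)
  show "\<And>y. 0 \<le> q y \<and> q y \<le> 1/2"
  proof -
    fix y
    define p where "p = W False y / (W False y + W True y)"
    have "0 \<le> p" "p \<le> 1" unfolding p_def using nn[of False y] nn[of True y]
      by (auto simp: divide_simps)
    thus "0 \<le> q y \<and> q y \<le> 1/2" unfolding q_def p_def[symmetric] by (auto simp: min_def)
  qed
  show "bhattacharyya W = (\<Sum>y\<in>UNIV. w y * zz (q y))"
    unfolding bhattacharyya_def w_def q_def using nn by (intro sum.cong refl col_Z)
  show "capacity W = (\<Sum>y\<in>UNIV. w y * (1 - Hn (q y) / ln 2))"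
    unfolding capacity_def w_def q_def
  proof (intro sum.cong refl)
    fix y
    have "(\<Sum>x\<in>UNIV. if W x y = 0 then 0 else 1 / 2 * W x y * log 2 (W x y / ((W False y + W True y) / 2)))
        = gt (W False y) (W False y + W True y) + gt (W True y) (W False y + W True y)"
      by (simp add: UNIV_bool gt_def)
    also have "\<dots> = (W False y + W True y) / 2 * (1 - Hn (min (W False y / (W False y + W True y)) (1 - W False y / (W False y + W True y))) / ln 2)"
      using nn by (intro col_C)
    finally show "(\<Sum>x\<in>UNIV. if W x y = 0 then 0 else 1 / 2 * W x y * log 2 (W x y / ((W False y + W True y) / 2)))
        = (W False y + W True y) / 2 * (1 - Hn (min (W False y / (W False y + W True y)) (1 - W False y / (W False y + W True y))) / ln 2)" .
  qed
qed


theorem mainTheorem9: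
  fixes W :: "bool \<Rightarrow> 'y::finite \<Rightarrow> real" and R :: real
  assumes "BIMS W" and "R \<ge> 0"
  shows "Eex_bsc R (capacity W) \<le> Eex W R \<and> Eex W R \<le> Eex_bec R (capacity W)"
proof -
  have ch: "channel W" using assms(1) unfolding BIMS_def by simp
  define w where "w = (\<lambda>y. (W False y + W True y) / 2)"
  define q where "q = (\<lambda>y. min (W False y / (W False y + W True y)) (1 - W False y / (W False y + W True y)))"
  have ws: "(\<Sum>y\<in>UNIV. w y) = 1" and w0: "\<And>y. 0 \<le> w y" and q0: "\<And>y. 0 \<le> q y \<and> q y \<le> 1/2"
    and Zeq: "bhattacharyya W = (\<Sum>y\<in>UNIV. w y * zz (q y))"
    and Ceq: "capacity W = (\<Sum>y\<in>UNIV. w y * (1 - Hn (q y) / ln 2))"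
    using chan_decomp[OF ch] unfolding w_def q_def by simp_all
  define S where "S = (\<Sum>y\<in>UNIV. w y * Hn (q y))"
  have CS: "capacity W = 1 - S / ln 2"
  proof -
    have "capacity W = (\<Sum>y\<in>UNIV. w y) - (\<Sum>y\<in>UNIV. w y * Hn (q y)) / ln 2"
      unfolding Ceq by (simp add: algebra_simps sum_subtractf sum_divide_distrib)
    thus ?thesis using ws S_def by simp
  qed
  have S0: "0 \<le> S" unfolding S_def using w0 q0 Hn_nonneg by (intro sum_nonneg mult_nonneg_nonneg) auto
  have S1: "S \<le> ln 2"
  proof -
    have "S \<le> (\<Sum>y\<in>UNIV. w y * ln 2)" unfolding S_def using w0 q0 Hn_le
      by (intro sum_mono mult_left_mono) auto
    thus ?thesis using ws by (simp add: sum_distrib_right[symmetric])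
  qed
  have Z0: "0 \<le> bhattacharyya W" unfolding Zeq
  proof (intro sum_nonneg mult_nonneg_nonneg w0)
    fix y show "0 \<le> zz (q y)" using q0[of y] by (intro zz_nonneg) auto
  qed
  have bec: "Eex W R \<le> Eex_bec R (capacity W)"
  proof -
    have "1 - capacity W = (\<Sum>y\<in>UNIV. w y * (Hn (q y) / ln 2))"
      unfolding CS S_def by (simp add: sum_divide_distrib)
    also have "\<dots> \<le> bhattacharyya W" unfolding Zeq using w0 q0 lower
      by (intro sum_mono mult_left_mono) auto
    finally have le: "1 - capacity W \<le> bhattacharyya W" .
    have "0 \<le> 1 - capacity W" unfolding CS using S0 by simp
    thus ?thesis unfolding Eex_def Eex_bec_def using le by (rule Eex_Z_anti)
  qed
  obtain p where p: "0 \<le> p" "p \<le> 1/2" "Hn p = S" using Hn_onto[OF S0 S1] by blast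
  have inv: "bin_entropy_inv (1 - capacity W) = p"
    by (rule bin_entropy_inv_eq) (use p CS in auto)
  have "bhattacharyya W \<le> zz p" unfolding Zeq
    by (rule jensen[where Y=UNIV]) (use ws w0 q0 p S_def in auto)
  hence bsc: "Eex_bsc R (capacity W) \<le> Eex W R"
    unfolding Eex_bsc_def Eex_def Let_def inv using Z0 unfolding zz_def[symmetric]
    by (intro Eex_Z_anti) (auto simp: zz_def)
  show ?thesis using bec bsc by simp
qed

end
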